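(* The group $W=\bigoplus_{i\in\mathbf{N}}W_i$ embeds in both $(\wr\mathbf{Z})^{\infty}$ and $(\mathbf{Z}\wr)^{\infty}$.
   Context: Restricted wreath product: $A\wr\mathbf{Z}=(\bigoplus_{i\in\mathbf{Z}}A)\rtimes\mathbf{Z}$. $W_0=1$, $W_i=W_{i-1}\wr\mathbf{Z}$; $(\mathbf{Z}\wr)^{\infty}$ is the ascending union of the $W_i$ with $W_i$ embedded in $W_{i+1}$ as the index-$0$ base summand. For permutation groups $(K,X)$, $(L,Y)$, the permutation wreath product $K\wr L\le\mathrm{Sym}(X\times Y)$ is generated by $(x,y)\mapsto(x\kappa,y)$, $(x,y')\mapsto(x,y')$ for $y'\neq y$ ($\kappa\in K$, $y\in Y$) and $(x,y)\mapsto(x,y\lambda)$ ($\lambda\in L$). $P_1=\mathbf{Z}$ on $\mathbf{Z}$ by translation, $P_{k+1}=\mathbf{Z}\wr P_k$ (permutation wreath product) with $P_k$ the top group; $(\wr\mathbf{Z})^{\infty}$ is the ascending union of the $P_k$. *)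

theory Defs
  imports "HOL-Algebra.Algebra"
begin

text \<open>(f,m) * (g,n) = (f * (m . g), m + n), where Z acts on the (finitely
  supported) base group by translation of the index: (m . g) i = g (i - m).\<close>
definition rwreath :: "('a, 'b) monoid_scheme \<Rightarrow> ((int \<Rightarrow> 'a) \<times> int) monoid" where
  "rwreath A =
    \<lparr>carrier = {x. fst x \<in> UNIV \<rightarrow> carrier A \<and> finite {i. fst x i \<noteq> \<one>\<^bsub>A\<^esub>}},
     monoid.mult = (\<lambda>x y. (\<lambda>i. fst x i \<otimes>\<^bsub>A\<^esub> fst y (i - snd x), snd x + snd y)),
     one = (\<lambda>_. \<one>\<^bsub>A\<^esub>, 0)\<rparr>"

definition transport :: "('a \<Rightarrow> 'c) \<Rightarrow> ('a, 'b) monoid_scheme \<Rightarrow> 'c monoid" where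
  "transport h G =
    \<lparr>carrier = h ` carrier G,
     monoid.mult = (\<lambda>x y. h (inv_into (carrier G) h x \<otimes>\<^bsub>G\<^esub> inv_into (carrier G) h y)),
     one = h \<one>\<^bsub>G\<^esub>\<rparr>"

text \<open>A uniform carrier type for the iterated wreath products W_i.\<close>
datatype wt = WOne | WT "int \<Rightarrow> wt" int

fun W :: "nat \<Rightarrow> wt monoid" where
  "W 0 = \<lparr>carrier = {WOne}, monoid.mult = (\<lambda>_ _. WOne), one = WOne\<rparr>"
| "W (Suc i) = transport (\<lambda>(f, n). WT f n) (rwreath (W i))"

definition W_emb :: "nat \<Rightarrow> wt \<Rightarrow> wt" where
  "W_emb i x = WT (\<lambda>k. if k = 0 then x else \<one>\<^bsub>W i\<^esub>) 0"

fun chain_emb :: "(nat \<Rightarrow> 'a \<Rightarrow> 'a) \<Rightarrow> nat \<Rightarrow> nat \<Rightarrow> 'a \<Rightarrow> 'a" where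
  "chain_emb e i 0 x = x"
| "chain_emb e i (Suc d) x = e (i + d) (chain_emb e i d x)"

definition dl_rel :: "(nat \<Rightarrow> ('a, 'b) monoid_scheme) \<Rightarrow> (nat \<Rightarrow> 'a \<Rightarrow> 'a)
    \<Rightarrow> ((nat \<times> 'a) \<times> (nat \<times> 'a)) set" where
  "dl_rel G e = {((i, x), (j, y)). x \<in> carrier (G i) \<and> y \<in> carrier (G j) \<and>
      (\<exists>k. i \<le> k \<and> j \<le> k \<and> chain_emb e i (k - i) x = chain_emb e j (k - j) y)}"

definition dirlim :: "(nat \<Rightarrow> ('a, 'b) monoid_scheme) \<Rightarrow> (nat \<Rightarrow> 'a \<Rightarrow> 'a)
    \<Rightarrow> (nat \<times> 'a) set monoid" where
  "dirlim G e =
    \<lparr>carrier = (SIGMA i:UNIV. carrier (G i)) // dl_rel G e,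
     monoid.mult = (\<lambda>A B. SOME C. \<exists>i x j y k. (i, x) \<in> A \<and> (j, y) \<in> B \<and> i \<le> k \<and> j \<le> k \<and>
        C = dl_rel G e `` {(k, chain_emb e i (k - i) x \<otimes>\<^bsub>G k\<^esub> chain_emb e j (k - j) y)}),
     one = dl_rel G e `` {(0, \<one>\<^bsub>G 0\<^esub>)}\<rparr>"

definition Zwr_inf :: "(nat \<times> wt) set monoid" where
  "Zwr_inf = dirlim W W_emb"

text \<open>Points of Z^k are integer lists of length k; a point (x,y) of X \<times> Y with
  X = Z and Y = Z^k is the list x # y.\<close>
definition pts :: "nat \<Rightarrow> int list set" where
  "pts k = {v. length v = k}"

definition pw_base :: "nat \<Rightarrow> int \<Rightarrow> int list \<Rightarrow> int list \<Rightarrow> int list" where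
  "pw_base k c y = (\<lambda>v \<in> pts (Suc k). if tl v = y then (hd v + c) # tl v else v)"

definition pw_top :: "nat \<Rightarrow> (int list \<Rightarrow> int list) \<Rightarrow> int list \<Rightarrow> int list" where
  "pw_top k l = (\<lambda>v \<in> pts (Suc k). hd v # l (tl v))"

definition pwr_Z :: "nat \<Rightarrow> (int list \<Rightarrow> int list) set \<Rightarrow> (int list \<Rightarrow> int list) set" where
  "pwr_Z k L = generate (BijGroup (pts (Suc k)))
      ({pw_base k c y | c y. y \<in> pts k} \<union> pw_top k ` L)"

fun P :: "nat \<Rightarrow> (int list \<Rightarrow> int list) set" where
  "P 0 = {\<lambda>v \<in> pts 0. v}"
| "P (Suc 0) = {(\<lambda>v \<in> pts 1. [hd v + c]) | c. True}"
| "P (Suc (Suc k)) = pwr_Z (Suc k) (P (Suc k))"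

definition P_grp :: "nat \<Rightarrow> (int list \<Rightarrow> int list) monoid" where
  "P_grp k = (BijGroup (pts k))\<lparr>carrier := P k\<rparr>"

definition wrZ_inf :: "(nat \<times> (int list \<Rightarrow> int list)) set monoid" where
  "wrZ_inf = dirlim (\<lambda>k. P_grp (Suc k)) (\<lambda>k. pw_top (Suc k))"

definition Wsum :: "(nat \<Rightarrow> wt) monoid" where
  "Wsum = sum_group UNIV W"

end

theory Submission
  imports Defs
begin

lemma chain_emb_add:
  "chain_emb e i (a + b) x = chain_emb e (i + a) b (chain_emb e i a x)"
  by (induction b) (simp_all add: add.assoc)

context
  fixes G :: "nat \<Rightarrow> ('a, 'b) monoid_scheme" and e :: "nat \<Rightarrow> 'a \<Rightarrow> 'a"
  assumes grp: "\<And>i. group (G i)"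
    and ehom: "\<And>i. e i \<in> hom (G i) (G (Suc i))"
    and einj: "\<And>i. inj_on (e i) (carrier (G i))"
begin

lemma chain_carrier: "x \<in> carrier (G i) \<Longrightarrow> chain_emb e i d x \<in> carrier (G (i + d))"
  by (induction d) (auto intro: hom_in_carrier[OF ehom])

lemma chain_mult: "x \<in> carrier (G i) \<Longrightarrow> y \<in> carrier (G i) \<Longrightarrow>
   chain_emb e i d (x \<otimes>\<^bsub>G i\<^esub> y) = chain_emb e i d x \<otimes>\<^bsub>G (i+d)\<^esub> chain_emb e i d y"
  by (induction d) (auto simp: hom_mult[OF ehom] chain_carrier)

lemma chain_inj: "x \<in> carrier (G i) \<Longrightarrow> y \<in> carrier (G i) \<Longrightarrow>
   chain_emb e i d x = chain_emb e i d y \<Longrightarrow> x = y"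
proof (induction d)
  case (Suc d)
  then show ?case using einj[of "i+d"] chain_carrier by (auto simp: inj_on_def)
qed simp

lemma chain_lift:
  assumes "i \<le> k" "k \<le> K"
  shows "chain_emb e i (K - i) x = chain_emb e k (K - k) (chain_emb e i (k - i) x)"
proof -
  have "K - i = (k - i) + (K - k)" using assms by simp
  then show ?thesis using chain_emb_add[of e i "k-i" "K-k" x] assms by simp
qed

abbreviation "R \<equiv> dl_rel G e"

lemma R_iff: "((i,x),(j,y)) \<in> R \<longleftrightarrow> x \<in> carrier (G i) \<and> y \<in> carrier (G j) \<and>
      (\<exists>k. i \<le> k \<and> j \<le> k \<and> chain_emb e i (k - i) x = chain_emb e j (k - j) y)"
  by (simp add: dl_rel_def)

lemma R_up:
  assumes "i \<le> k" "j \<le> k" "chain_emb e i (k - i) x = chain_emb e j (k - j) y" "k \<le> K"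
  shows "chain_emb e i (K - i) x = chain_emb e j (K - j) y"
  using chain_lift[of i k K x] chain_lift[of j k K y] assms by simp

lemma R_equiv: "equiv (SIGMA i:UNIV. carrier (G i)) R"
proof (rule equivI)
  show "refl_on (SIGMA i:UNIV. carrier (G i)) R"
    by (auto simp: refl_on_def dl_rel_def)
  show "sym R" by (auto simp: sym_def dl_rel_def)
  show "trans R"
  proof (rule transI)
    fix a b c assume ab: "(a,b) \<in> R" and bc: "(b,c) \<in> R"
    obtain i x j y l z where abc: "a = (i,x)" "b = (j,y)" "c = (l,z)" by (cases a, cases b, cases c) auto
    from ab obtain k1 where k1: "i \<le> k1" "j \<le> k1" "chain_emb e i (k1 - i) x = chain_emb e j (k1 - j) y"
      and cx: "x \<in> carrier (G i)" using abc by (auto simp: dl_rel_def)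
    from bc obtain k2 where k2: "j \<le> k2" "l \<le> k2" "chain_emb e j (k2 - j) y = chain_emb e l (k2 - l) z"
      and cz: "z \<in> carrier (G l)" using abc by (auto simp: dl_rel_def)
    let ?K = "max k1 k2"
    have "chain_emb e i (?K - i) x = chain_emb e j (?K - j) y" using R_up[OF k1] by simp
    moreover have "chain_emb e j (?K - j) y = chain_emb e l (?K - l) z" using R_up[OF k2] by simp
    ultimately show "(a,c) \<in> R" using abc cx cz k1 k2
      by (auto simp: dl_rel_def intro!: exI[of _ ?K])
  qed
qed (auto simp: dl_rel_def)


lemma dirlim_mon:
  fixes S :: "('c, 'd) monoid_scheme" and \<phi> :: "nat \<Rightarrow> 'c \<Rightarrow> 'a" and N :: "'c \<Rightarrow> nat"
  assumes Sclosed: "\<And>x y. x \<in> carrier S \<Longrightarrow> y \<in> carrier S \<Longrightarrow> x \<otimes>\<^bsub>S\<^esub> y \<in> carrier S"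
    and phic: "\<And>n x. x \<in> carrier S \<Longrightarrow> \<phi> n x \<in> carrier (G n)"
    and phim: "\<And>n x y. x \<in> carrier S \<Longrightarrow> y \<in> carrier S \<Longrightarrow>
        \<phi> n (x \<otimes>\<^bsub>S\<^esub> y) = \<phi> n x \<otimes>\<^bsub>G n\<^esub> \<phi> n y"
    and phie: "\<And>n x. x \<in> carrier S \<Longrightarrow> N x \<le> n \<Longrightarrow> \<phi> (Suc n) x = e n (\<phi> n x)"
    and phii: "\<And>n x y. x \<in> carrier S \<Longrightarrow> y \<in> carrier S \<Longrightarrow> N x \<le> n \<Longrightarrow> N y \<le> n \<Longrightarrow>
        \<phi> n x = \<phi> n y \<Longrightarrow> x = y"
  shows "(\<lambda>x. dl_rel G e `` {(N x, \<phi> (N x) x)}) \<in> mon S (dirlim G e)"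
proof -
  let ?h = "\<lambda>x. R `` {(N x, \<phi> (N x) x)}"
  have phich: "\<phi> (N x + d) x = chain_emb e (N x) d (\<phi> (N x) x)" if "x \<in> carrier S" for x d
    by (induction d) (simp_all add: phie[OF that])
  have phik: "chain_emb e (N x) (k - N x) (\<phi> (N x) x) = \<phi> k x" if "x \<in> carrier S" "N x \<le> k" for x k
    using phich[OF that(1), of "k - N x"] that(2) by simp
  have phiup: "chain_emb e k (K - k) (\<phi> k x) = \<phi> K x" if "x \<in> carrier S" "N x \<le> k" "k \<le> K" for x k K
  proof -
    have "\<phi> K x = chain_emb e (N x) (K - N x) (\<phi> (N x) x)" using phik[OF that(1), of K] that by simp
    also have "\<dots> = chain_emb e k (K - k) (chain_emb e (N x) (k - N x) (\<phi> (N x) x))"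
      by (rule chain_lift) (use that in auto)
    also have "\<dots> = chain_emb e k (K - k) (\<phi> k x)" using phik[OF that(1,2)] by simp
    finally show ?thesis by simp
  qed
  have rel: "((N x, \<phi> (N x) x), (k, a)) \<in> R \<longleftrightarrow> a \<in> carrier (G k) \<and>
      (\<exists>K. N x \<le> K \<and> k \<le> K \<and> \<phi> K x = chain_emb e k (K - k) a)" if "x \<in> carrier S" for x k a
    using phik[OF that] phic[OF that] by (auto simp: dl_rel_def)
  have eqv: "equiv (SIGMA i:UNIV. carrier (G i)) R" by (rule R_equiv)
  have hc: "?h x \<in> carrier (dirlim G e)" if "x \<in> carrier S" for x
    using phic[OF that] by (auto simp: dirlim_def intro!: quotientI)
  have inj: "inj_on ?h (carrier S)"
  proof (rule inj_onI)
    fix x y assume x: "x \<in> carrier S" and y: "y \<in> carrier S" and eq: "?h x = ?h y"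
    have "((N x, \<phi> (N x) x), (N y, \<phi> (N y) y)) \<in> R"
      using eq_equiv_class_iff[OF eqv, of "(N x, \<phi> (N x) x)" "(N y, \<phi> (N y) y)"] phic[OF x] phic[OF y] eq by simp
    then obtain K where K: "N x \<le> K" "N y \<le> K" "\<phi> K x = chain_emb e (N y) (K - N y) (\<phi> (N y) y)"
      using rel[OF x] by auto
    then have "\<phi> K x = \<phi> K y" using phik[OF y K(2)] by simp
    then show "x = y" using phii[OF x y K(1,2)] by simp
  qed
  have hm: "?h (x \<otimes>\<^bsub>S\<^esub> y) = ?h x \<otimes>\<^bsub>dirlim G e\<^esub> ?h y" if x: "x \<in> carrier S" and y: "y \<in> carrier S" for x y
  proof -
    let ?z = "x \<otimes>\<^bsub>S\<^esub> y"
    have z: "?z \<in> carrier S" using Sclosed x y .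
    let ?P = "\<lambda>C. \<exists>i a j b k. (i, a) \<in> ?h x \<and> (j, b) \<in> ?h y \<and> i \<le> k \<and> j \<le> k \<and>
        C = R `` {(k, chain_emb e i (k - i) a \<otimes>\<^bsub>G k\<^esub> chain_emb e j (k - j) b)}"
    have all: "C = ?h ?z" if "?P C" for C
    proof -
      from that obtain i a j b k where ia: "(i, a) \<in> ?h x" and jb: "(j, b) \<in> ?h y" and
        ik: "i \<le> k" and jk: "j \<le> k" and C: "C = R `` {(k, chain_emb e i (k - i) a \<otimes>\<^bsub>G k\<^esub> chain_emb e j (k - j) b)}"
        by blast
      from ia obtain K1 where a: "a \<in> carrier (G i)" and K1: "N x \<le> K1" "i \<le> K1" "\<phi> K1 x = chain_emb e i (K1 - i) a"
        using rel[OF x] by auto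
      from jb obtain K2 where b: "b \<in> carrier (G j)" and K2: "N y \<le> K2" "j \<le> K2" "\<phi> K2 y = chain_emb e j (K2 - j) b"
        using rel[OF y] by auto
      define K where "K = max (max K1 K2) (max k (N ?z))"
      have ca: "chain_emb e i (k - i) a \<in> carrier (G k)" using chain_carrier[OF a, of "k - i"] ik by simp
      have cb: "chain_emb e j (k - j) b \<in> carrier (G k)" using chain_carrier[OF b, of "k - j"] jk by simp
      have "chain_emb e k (K - k) (chain_emb e i (k - i) a \<otimes>\<^bsub>G k\<^esub> chain_emb e j (k - j) b)
          = chain_emb e k (K - k) (chain_emb e i (k - i) a) \<otimes>\<^bsub>G K\<^esub> chain_emb e k (K - k) (chain_emb e j (k - j) b)"
        using chain_mult[OF ca cb, of "K - k"] K_def by simp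
      also have "\<dots> = chain_emb e i (K - i) a \<otimes>\<^bsub>G K\<^esub> chain_emb e j (K - j) b"
        using chain_lift[OF ik, of K a] chain_lift[OF jk, of K b] K_def by simp
      also have "chain_emb e i (K - i) a = \<phi> K x"
      proof -
        have "chain_emb e i (K - i) a = chain_emb e K1 (K - K1) (chain_emb e i (K1 - i) a)"
          by (rule chain_lift) (use K1 K_def in auto)
        also have "\<dots> = \<phi> K x" using K1(3) phiup[OF x K1(1), of K] K_def by simp
        finally show ?thesis .
      qed
      also have "chain_emb e j (K - j) b = \<phi> K y"
      proof -
        have "chain_emb e j (K - j) b = chain_emb e K2 (K - K2) (chain_emb e j (K2 - j) b)"
          by (rule chain_lift) (use K2 K_def in auto)
        also have "\<dots> = \<phi> K y" using K2(3) phiup[OF y K2(1), of K] K_def by simp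
        finally show ?thesis .
      qed
      also have "\<phi> K x \<otimes>\<^bsub>G K\<^esub> \<phi> K y = \<phi> K ?z" using phim[OF x y] by simp
      finally have eqK: "chain_emb e k (K - k) (chain_emb e i (k - i) a \<otimes>\<^bsub>G k\<^esub> chain_emb e j (k - j) b) = \<phi> K ?z" .
      have inc: "chain_emb e i (k - i) a \<otimes>\<^bsub>G k\<^esub> chain_emb e j (k - j) b \<in> carrier (G k)"
        using ca cb group.subgroup_self[OF grp] by (simp add: group.is_monoid grp monoid.m_closed)
      have "((N ?z, \<phi> (N ?z) ?z), (k, chain_emb e i (k - i) a \<otimes>\<^bsub>G k\<^esub> chain_emb e j (k - j) b)) \<in> R"
        using rel[OF z] inc eqK K_def by (auto intro!: exI[of _ K])
      then show ?thesis unfolding C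
        using eq_equiv_class_iff[OF eqv, of "(N ?z, \<phi> (N ?z) ?z)" "(k, chain_emb e i (k - i) a \<otimes>\<^bsub>G k\<^esub> chain_emb e j (k - j) b)"] inc phic[OF z] by simp
    qed
    have ex: "?P (?h ?z)"
    proof -
      define k where "k = max (N x) (N y)"
      have "(N x, \<phi> (N x) x) \<in> ?h x" "(N y, \<phi> (N y) y) \<in> ?h y"
        using phic x y by (auto simp: dl_rel_def)
      moreover have "?P (R `` {(k, chain_emb e (N x) (k - N x) (\<phi> (N x) x) \<otimes>\<^bsub>G k\<^esub> chain_emb e (N y) (k - N y) (\<phi> (N y) y))})"
        apply (rule exI[of _ "N x"], rule exI[of _ "\<phi> (N x) x"], rule exI[of _ "N y"], rule exI[of _ "\<phi> (N y) y"], rule exI[of _ k])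
        using calculation k_def by simp
      ultimately show ?thesis using all[of "R `` {(k, chain_emb e (N x) (k - N x) (\<phi> (N x) x) \<otimes>\<^bsub>G k\<^esub> chain_emb e (N y) (k - N y) (\<phi> (N y) y))}"] by simp
    qed
    have "?h x \<otimes>\<^bsub>dirlim G e\<^esub> ?h y = (SOME C. ?P C)" by (simp add: dirlim_def)
    also have "\<dots> = ?h ?z" using someI_ex[of ?P, OF exI[of ?P, OF ex]] all by simp
    finally show ?thesis by simp
  qed
  show ?thesis unfolding mon_def hom_def using hc hm inj by auto
qed

end

section \<open>Transport and restricted wreath product\<close>

lemma transport_carrier: "carrier (transport h G) = h ` carrier G"
  by (simp add: transport_def)

lemma transport_one: "\<one>\<^bsub>transport h G\<^esub> = h \<one>\<^bsub>G\<^esub>"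
  by (simp add: transport_def)

lemma transport_mult:
  assumes "inj_on h (carrier G)" "x \<in> carrier G" "y \<in> carrier G"
  shows "h x \<otimes>\<^bsub>transport h G\<^esub> h y = h (x \<otimes>\<^bsub>G\<^esub> y)"
  using assms by (simp add: transport_def inv_into_f_f)

lemma group_transport:
  assumes G: "group G" and inj: "inj_on h (carrier G)"
  shows "group (transport h G)"
proof (rule groupI)
  interpret G: group G by (rule G)
  fix x y assume "x \<in> carrier (transport h G)" "y \<in> carrier (transport h G)"
  then obtain a b where ab: "a \<in> carrier G" "b \<in> carrier G" "x = h a" "y = h b"
    by (auto simp: transport_carrier)
  then show "x \<otimes>\<^bsub>transport h G\<^esub> y \<in> carrier (transport h G)"
    by (simp add: transport_mult[OF inj] transport_carrier)
next
  interpret G: group G by (rule G)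
  show "\<one>\<^bsub>transport h G\<^esub> \<in> carrier (transport h G)" by (simp add: transport_carrier transport_one)
next
  interpret G: group G by (rule G)
  fix x y z assume "x \<in> carrier (transport h G)" "y \<in> carrier (transport h G)" "z \<in> carrier (transport h G)"
  then obtain a b c where abc: "a \<in> carrier G" "b \<in> carrier G" "c \<in> carrier G" "x = h a" "y = h b" "z = h c"
    by (auto simp: transport_carrier)
  then show "x \<otimes>\<^bsub>transport h G\<^esub> y \<otimes>\<^bsub>transport h G\<^esub> z =
      x \<otimes>\<^bsub>transport h G\<^esub> (y \<otimes>\<^bsub>transport h G\<^esub> z)"
    by (simp add: transport_mult[OF inj] G.m_assoc)
next
  interpret G: group G by (rule G)
  fix x assume "x \<in> carrier (transport h G)"
  then obtain a where a: "a \<in> carrier G" "x = h a" by (auto simp: transport_carrier)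
  then show "\<one>\<^bsub>transport h G\<^esub> \<otimes>\<^bsub>transport h G\<^esub> x = x"
    by (simp add: transport_mult[OF inj] transport_one)
next
  interpret G: group G by (rule G)
  fix x assume "x \<in> carrier (transport h G)"
  then obtain a where a: "a \<in> carrier G" "x = h a" by (auto simp: transport_carrier)
  then have "h (inv\<^bsub>G\<^esub> a) \<in> carrier (transport h G) \<and> h (inv\<^bsub>G\<^esub> a) \<otimes>\<^bsub>transport h G\<^esub> x = \<one>\<^bsub>transport h G\<^esub>"
    by (simp add: transport_mult[OF inj] transport_one transport_carrier)
  then show "\<exists>y\<in>carrier (transport h G). y \<otimes>\<^bsub>transport h G\<^esub> x = \<one>\<^bsub>transport h G\<^esub>" by blast
qed

lemma rwreath_carrier:
  "(f, m) \<in> carrier (rwreath A) \<longleftrightarrow> (\<forall>i. f i \<in> carrier A) \<and> finite {i. f i \<noteq> \<one>\<^bsub>A\<^esub>}"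
  by (auto simp: rwreath_def)

lemma rwreath_mult: "(f, m) \<otimes>\<^bsub>rwreath A\<^esub> (g, n) = (\<lambda>i. f i \<otimes>\<^bsub>A\<^esub> g (i - m), m + n)"
  by (simp add: rwreath_def)

lemma rwreath_one: "\<one>\<^bsub>rwreath A\<^esub> = (\<lambda>_. \<one>\<^bsub>A\<^esub>, 0)"
  by (simp add: rwreath_def)

lemma group_rwreath:
  assumes A: "group A" shows "group (rwreath A)"
proof -
  interpret A: group A by (rule A)
  have fin_shift: "finite {i. g (i - m) \<noteq> \<one>\<^bsub>A\<^esub>}" if "finite {i. g i \<noteq> \<one>\<^bsub>A\<^esub>}" for g :: "int \<Rightarrow> 'a" and m
  proof -
    have "{i. g (i - m) \<noteq> \<one>\<^bsub>A\<^esub>} = (\<lambda>j. j + m) ` {i. g i \<noteq> \<one>\<^bsub>A\<^esub>}"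
      by (auto simp: image_iff intro!: exI[of _ "_ - m"])
    then show ?thesis using that by simp
  qed
  show ?thesis
  proof (rule groupI)
    fix x y assume x: "x \<in> carrier (rwreath A)" and y: "y \<in> carrier (rwreath A)"
    obtain f m g n where xy: "x = (f, m)" "y = (g, n)" by (cases x, cases y) auto
    have ff: "\<forall>i. f i \<in> carrier A" "finite {i. f i \<noteq> \<one>\<^bsub>A\<^esub>}" using x xy rwreath_carrier by auto
    have gg: "\<forall>i. g i \<in> carrier A" "finite {i. g i \<noteq> \<one>\<^bsub>A\<^esub>}" using y xy rwreath_carrier by auto
    have "{i. f i \<otimes>\<^bsub>A\<^esub> g (i - m) \<noteq> \<one>\<^bsub>A\<^esub>} \<subseteq> {i. f i \<noteq> \<one>\<^bsub>A\<^esub>} \<union> {i. g (i - m) \<noteq> \<one>\<^bsub>A\<^esub>}"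
      using ff gg by auto
    then have "finite {i. f i \<otimes>\<^bsub>A\<^esub> g (i - m) \<noteq> \<one>\<^bsub>A\<^esub>}"
      using ff gg fin_shift[of g m] finite_subset by blast
    then show "x \<otimes>\<^bsub>rwreath A\<^esub> y \<in> carrier (rwreath A)"
      using ff gg by (simp add: xy rwreath_mult rwreath_carrier)
  next
    show "\<one>\<^bsub>rwreath A\<^esub> \<in> carrier (rwreath A)" by (simp add: rwreath_one rwreath_carrier)
  next
    fix x y z assume x: "x \<in> carrier (rwreath A)" and y: "y \<in> carrier (rwreath A)" and z: "z \<in> carrier (rwreath A)"
    obtain f m g n h p where xyz: "x = (f, m)" "y = (g, n)" "z = (h, p)" by (cases x, cases y, cases z) auto
    have "\<forall>i. f i \<in> carrier A" "\<forall>i. g i \<in> carrier A" "\<forall>i. h i \<in> carrier A"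
      using x y z xyz rwreath_carrier by auto
    then show "x \<otimes>\<^bsub>rwreath A\<^esub> y \<otimes>\<^bsub>rwreath A\<^esub> z = x \<otimes>\<^bsub>rwreath A\<^esub> (y \<otimes>\<^bsub>rwreath A\<^esub> z)"
      by (simp add: xyz rwreath_mult A.m_assoc algebra_simps)
  next
    fix x assume x: "x \<in> carrier (rwreath A)"
    obtain f m where xx: "x = (f, m)" by (cases x) auto
    have "\<forall>i. f i \<in> carrier A" using x xx rwreath_carrier by auto
    then show "\<one>\<^bsub>rwreath A\<^esub> \<otimes>\<^bsub>rwreath A\<^esub> x = x"
      by (simp add: xx rwreath_mult rwreath_one)
  next
    fix x assume x: "x \<in> carrier (rwreath A)"
    obtain f m where xx: "x = (f, m)" by (cases x) auto
    have ff: "\<forall>i. f i \<in> carrier A" "finite {i. f i \<noteq> \<one>\<^bsub>A\<^esub>}" using x xx rwreath_carrier by auto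
    let ?y = "(\<lambda>i. inv\<^bsub>A\<^esub> f (i + m), - m)"
    have "{i. inv\<^bsub>A\<^esub> f (i + m) \<noteq> \<one>\<^bsub>A\<^esub>} = {i. f (i - (- m)) \<noteq> \<one>\<^bsub>A\<^esub>}"
      using ff by (auto simp: A.inv_eq_1_iff)
    then have "finite {i. inv\<^bsub>A\<^esub> f (i + m) \<noteq> \<one>\<^bsub>A\<^esub>}" using fin_shift[OF ff(2), of "- m"] by simp
    then have "?y \<in> carrier (rwreath A)" using ff by (simp add: rwreath_carrier)
    moreover have "?y \<otimes>\<^bsub>rwreath A\<^esub> x = \<one>\<^bsub>rwreath A\<^esub>"
      using ff by (simp add: xx rwreath_mult rwreath_one)
    ultimately show "\<exists>y\<in>carrier (rwreath A). y \<otimes>\<^bsub>rwreath A\<^esub> x = \<one>\<^bsub>rwreath A\<^esub>" by blast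
  qed
qed

lemma inj_WT: "inj_on (\<lambda>(a, b). WT a b) S"
  by (auto simp: inj_on_def)

lemma group_W: "group (W i)"
  by (induction i) (auto intro!: group_transport group_rwreath inj_WT groupI)

lemma W_Suc_carrier0: "WT f m \<in> carrier (W (Suc i)) \<longleftrightarrow> (f, m) \<in> carrier (rwreath (W i))"
proof
  assume "WT f m \<in> carrier (W (Suc i))"
  then obtain a b where "(a, b) \<in> carrier (rwreath (W i))" "WT f m = WT a b"
    by (auto simp: transport_carrier)
  then show "(f, m) \<in> carrier (rwreath (W i))" by simp
next
  assume "(f, m) \<in> carrier (rwreath (W i))"
  then show "WT f m \<in> carrier (W (Suc i))"
    by (simp add: transport_carrier) (metis (no_types, lifting) case_prod_conv image_eqI)
qed

lemma W_Suc_carrier: "WT f m \<in> carrier (W (Suc i)) \<longleftrightarrow> (\<forall>j. f j \<in> carrier (W i)) \<and> finite {j. f j \<noteq> \<one>\<^bsub>W i\<^esub>}"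
  unfolding W_Suc_carrier0 rwreath_carrier ..

lemma W_Suc_carrier_cases: "x \<in> carrier (W (Suc i)) \<Longrightarrow> \<exists>f m. x = WT f m"
  by (auto simp: transport_carrier)

lemma W_Suc_one: "\<one>\<^bsub>W (Suc i)\<^esub> = WT (\<lambda>_. \<one>\<^bsub>W i\<^esub>) 0"
  by (simp add: transport_one rwreath_one)

lemma W_Suc_mult:
  assumes "WT f m \<in> carrier (W (Suc i))" "WT g n \<in> carrier (W (Suc i))"
  shows "WT f m \<otimes>\<^bsub>W (Suc i)\<^esub> WT g n = WT (\<lambda>j. f j \<otimes>\<^bsub>W i\<^esub> g (j - m)) (m + n)"
proof -
  have "(f, m) \<in> carrier (rwreath (W i))" "(g, n) \<in> carrier (rwreath (W i))"
    using assms unfolding W_Suc_carrier0 .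
  then show ?thesis
    using transport_mult[where G="rwreath (W i)" and x="(f, m)" and y="(g, n)", OF inj_WT] by (simp add: rwreath_mult)
qed

lemma W_one_carrier: "\<one>\<^bsub>W i\<^esub> \<in> carrier (W i)"
  using group_W[of i] by (simp add: group.is_monoid monoid.one_closed)

lemma W_mult_closed: "x \<in> carrier (W i) \<Longrightarrow> y \<in> carrier (W i) \<Longrightarrow> x \<otimes>\<^bsub>W i\<^esub> y \<in> carrier (W i)"
  using group_W[of i] by (simp add: group.is_monoid monoid.m_closed)

lemma W_l_one: "x \<in> carrier (W i) \<Longrightarrow> \<one>\<^bsub>W i\<^esub> \<otimes>\<^bsub>W i\<^esub> x = x"
  using group_W[of i] by (simp add: group.is_monoid monoid.l_one)

lemma fin_supp2: "finite {k::int. (if k = 0 then a else if k = 1 then b else c) \<noteq> c}"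
  by (rule finite_subset[of _ "{0, 1}"]) auto

lemma fin_supp1: "finite {k::int. (if k = 0 then a else c) \<noteq> c}"
  by (rule finite_subset[of _ "{0}"]) auto

lemma W_emb_carrier: "x \<in> carrier (W i) \<Longrightarrow> W_emb i x \<in> carrier (W (Suc i))"
  unfolding W_emb_def W_Suc_carrier using W_one_carrier fin_supp1 by auto

lemma W_emb_hom: "W_emb i \<in> hom (W i) (W (Suc i))"
proof (rule homI)
  fix x assume "x \<in> carrier (W i)" then show "W_emb i x \<in> carrier (W (Suc i))" by (rule W_emb_carrier)
next
  fix x y assume x: "x \<in> carrier (W i)" and y: "y \<in> carrier (W i)"
  have "W_emb i x \<otimes>\<^bsub>W (Suc i)\<^esub> W_emb i y =
      WT (\<lambda>j. (if j = 0 then x else \<one>\<^bsub>W i\<^esub>) \<otimes>\<^bsub>W i\<^esub> (if j - 0 = 0 then y else \<one>\<^bsub>W i\<^esub>)) (0 + 0)"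
    unfolding W_emb_def by (rule W_Suc_mult) (use W_emb_carrier x y in \<open>auto simp: W_emb_def\<close>)
  also have "\<dots> = W_emb i (x \<otimes>\<^bsub>W i\<^esub> y)"
    unfolding W_emb_def using W_l_one[OF W_one_carrier] by (auto intro!: ext)
  finally show "W_emb i (x \<otimes>\<^bsub>W i\<^esub> y) = W_emb i x \<otimes>\<^bsub>W (Suc i)\<^esub> W_emb i y" by simp
qed

lemma W_emb_inj: "inj_on (W_emb i) (carrier (W i))"
  by (rule inj_onI) (simp add: W_emb_def fun_eq_iff, metis)

lemma Wsum_carrier: "carrier Wsum = {x. (\<forall>i. x i \<in> carrier (W i)) \<and> finite {i. x i \<noteq> \<one>\<^bsub>W i\<^esub>}}"
  unfolding Wsum_def using carrier_sum_group[of UNIV W] group_W by (auto simp: PiE_def)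

lemma Wsum_mult: "x \<otimes>\<^bsub>Wsum\<^esub> y = (\<lambda>i. x i \<otimes>\<^bsub>W i\<^esub> y i)"
  unfolding Wsum_def by (simp add: restrict_def)

lemma Wsum_group: "group Wsum"
  unfolding Wsum_def using group_W by simp

lemma Wsum_closed: "x \<in> carrier Wsum \<Longrightarrow> y \<in> carrier Wsum \<Longrightarrow> x \<otimes>\<^bsub>Wsum\<^esub> y \<in> carrier Wsum"
  by (rule monoid.m_closed[OF group.is_monoid[OF Wsum_group]])

definition NW :: "(nat \<Rightarrow> wt) \<Rightarrow> nat" where
  "NW x = (LEAST n. \<forall>j\<ge>n. x j = \<one>\<^bsub>W j\<^esub>)"

lemma NW: assumes "x \<in> carrier Wsum" "NW x \<le> j" shows "x j = \<one>\<^bsub>W j\<^esub>"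
proof -
  have "finite {i. x i \<noteq> \<one>\<^bsub>W i\<^esub>}" using assms Wsum_carrier by auto
  then obtain m where "\<forall>i \<in> {i. x i \<noteq> \<one>\<^bsub>W i\<^esub>}. i < m" using finite_nat_set_iff_bounded by blast
  then have "\<forall>j\<ge>m. x j = \<one>\<^bsub>W j\<^esub>" by force
  then have "\<forall>j\<ge>NW x. x j = \<one>\<^bsub>W j\<^esub>" unfolding NW_def by (rule LeastI)
  then show ?thesis using assms by simp
qed

section \<open>Embedding into (Z wr)^infinity\<close>

fun phiW :: "(nat \<Rightarrow> wt) \<Rightarrow> nat \<Rightarrow> wt" where
  "phiW x 0 = WOne"
| "phiW x (Suc n) = WT (\<lambda>k. if k = 0 then phiW x n else if k = 1 then x n else \<one>\<^bsub>W n\<^esub>) 0"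

lemma phiW_carrier: "x \<in> carrier Wsum \<Longrightarrow> phiW x n \<in> carrier (W n)"
proof (induction n)
  case 0 then show ?case by simp
next
  case (Suc n)
  have "\<forall>i. x i \<in> carrier (W i)" using Suc.prems Wsum_carrier by auto
  then show ?case unfolding phiW.simps W_Suc_carrier
    using fin_supp2[of "phiW x n" "x n" "\<one>\<^bsub>W n\<^esub>"] W_one_carrier Suc by simp
qed

lemma phiW_mult: "x \<in> carrier Wsum \<Longrightarrow> y \<in> carrier Wsum \<Longrightarrow>
    phiW (x \<otimes>\<^bsub>Wsum\<^esub> y) n = phiW x n \<otimes>\<^bsub>W n\<^esub> phiW y n"
proof (induction n)
  case 0 then show ?case by simp
next
  case (Suc n)
  have c: "phiW x (Suc n) \<in> carrier (W (Suc n))" "phiW y (Suc n) \<in> carrier (W (Suc n))"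
    using phiW_carrier Suc.prems by blast+
  have "phiW x (Suc n) \<otimes>\<^bsub>W (Suc n)\<^esub> phiW y (Suc n) =
     WT (\<lambda>j. (if j = 0 then phiW x n else if j = 1 then x n else \<one>\<^bsub>W n\<^esub>) \<otimes>\<^bsub>W n\<^esub>
              (if j - 0 = 0 then phiW y n else if j - 0 = 1 then y n else \<one>\<^bsub>W n\<^esub>)) (0 + 0)"
    using W_Suc_mult[OF c(1)[unfolded phiW.simps] c(2)[unfolded phiW.simps]] by simp
  also have "\<dots> = phiW (x \<otimes>\<^bsub>Wsum\<^esub> y) (Suc n)"
    using Suc W_l_one[OF W_one_carrier] by (auto simp: Wsum_mult intro!: ext)
  finally show ?case by simp
qed

lemma phiW_emb: "x \<in> carrier Wsum \<Longrightarrow> NW x \<le> n \<Longrightarrow> phiW x (Suc n) = W_emb n (phiW x n)"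
  using NW[of x n] by (auto simp: W_emb_def intro!: ext)

lemma phiW_eq: "phiW x n = phiW y n \<Longrightarrow> j < n \<Longrightarrow> x j = y j"
proof (induction n)
  case 0 then show ?case by simp
next
  case (Suc n)
  have e: "(\<lambda>k::int. if k = 0 then phiW x n else if k = 1 then x n else \<one>\<^bsub>W n\<^esub>) =
           (\<lambda>k. if k = 0 then phiW y n else if k = 1 then y n else \<one>\<^bsub>W n\<^esub>)" using Suc.prems(1) by simp
  have "phiW x n = phiW y n" using fun_cong[OF e, of 0] by simp
  moreover have "x n = y n" using fun_cong[OF e, of 1] by simp
  ultimately show ?case using Suc by (cases "j = n") auto
qed

lemma phiW_inj: "x \<in> carrier Wsum \<Longrightarrow> y \<in> carrier Wsum \<Longrightarrow> NW x \<le> n \<Longrightarrow> NW y \<le> n \<Longrightarrow>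
   phiW x n = phiW y n \<Longrightarrow> x = y"
proof (rule ext)
  fix j assume x: "x \<in> carrier Wsum" and y: "y \<in> carrier Wsum" and nx: "NW x \<le> n" and ny: "NW y \<le> n"
    and e: "phiW x n = phiW y n"
  show "x j = y j"
  proof (cases "j < n")
    case True then show ?thesis using phiW_eq[OF e] by simp
  next
    case False then show ?thesis using NW[OF x, of j] NW[OF y, of j] nx ny by simp
  qed
qed

theorem part_Zwr: "\<exists>h. h \<in> mon Wsum Zwr_inf"
  unfolding Zwr_inf_def
  apply (rule exI)
  apply (rule dirlim_mon[where S=Wsum and \<phi>="\<lambda>n x. phiW x n" and N=NW])
         apply (rule group_W)
        apply (rule W_emb_hom)
       apply (rule W_emb_inj)
      apply (erule (1) Wsum_closed)
     apply (erule phiW_carrier)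
    apply (erule (1) phiW_mult)
   apply (erule (1) phiW_emb)
  apply (erule (4) phiW_inj)
  done

lemma Bij_hom:
  assumes ext: "\<And>g. g \<in> Bij S \<Longrightarrow> \<Phi> g \<in> extensional T"
    and img: "\<And>g x. g \<in> Bij S \<Longrightarrow> x \<in> T \<Longrightarrow> \<Phi> g x \<in> T"
    and cmp: "\<And>g h. g \<in> Bij S \<Longrightarrow> h \<in> Bij S \<Longrightarrow> \<Phi> (compose S g h) = compose T (\<Phi> g) (\<Phi> h)"
    and idt: "\<Phi> (\<lambda>x\<in>S. x) = (\<lambda>x\<in>T. x)"
  shows "\<Phi> \<in> hom (BijGroup S) (BijGroup T)"
proof -
  have bij: "\<Phi> g \<in> Bij T" if g: "g \<in> Bij S" for g
  proof -
    let ?g' = "\<lambda>y\<in>S. inv_into S g y"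
    have g': "?g' \<in> Bij S" using restrict_inv_into_Bij[OF g] .
    have bg: "bij_betw g S S" using g by (simp add: Bij_def)
    have c1: "compose S ?g' g = (\<lambda>x\<in>S. x)" using compose_inv_into_id[OF bg] .
    have c2: "compose S g ?g' = (\<lambda>x\<in>S. x)" using compose_id_inv_into[of g S S] bg by (simp add: bij_betw_def)
    have l: "\<Phi> ?g' (\<Phi> g x) = x" if "x \<in> T" for x
    proof -
      have "compose T (\<Phi> ?g') (\<Phi> g) = (\<lambda>x\<in>T. x)" using cmp[OF g' g] c1 idt by simp
      then have "compose T (\<Phi> ?g') (\<Phi> g) x = x" using that by simp
      then show ?thesis using that by (simp add: compose_def)
    qed
    have r: "\<Phi> g (\<Phi> ?g' x) = x" if "x \<in> T" for x
    proof -
      have "compose T (\<Phi> g) (\<Phi> ?g') = (\<lambda>x\<in>T. x)" using cmp[OF g g'] c2 idt by simp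
      then have "compose T (\<Phi> g) (\<Phi> ?g') x = x" using that by simp
      then show ?thesis using that by (simp add: compose_def)
    qed
    have "bij_betw (\<Phi> g) T T"
      by (rule bij_betw_byWitness[where f'="\<Phi> ?g'"]) (use l r img[OF g] img[OF g'] in auto)
    then show ?thesis using ext[OF g] by (simp add: Bij_def)
  qed
  show ?thesis
  proof (rule homI)
    fix g assume "g \<in> carrier (BijGroup S)" then show "\<Phi> g \<in> carrier (BijGroup T)"
      using bij by (simp add: BijGroup_def)
  next
    fix g h assume "g \<in> carrier (BijGroup S)" "h \<in> carrier (BijGroup S)"
    then show "\<Phi> (g \<otimes>\<^bsub>BijGroup S\<^esub> h) = \<Phi> g \<otimes>\<^bsub>BijGroup T\<^esub> \<Phi> h"
      using bij cmp by (simp add: BijGroup_def compose_Bij)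
  qed
qed

lemma Bij_pts_img: "g \<in> Bij S \<Longrightarrow> x \<in> S \<Longrightarrow> g x \<in> S"
  using Bij_imp_funcset by blast

lemma pts_Suc_cases: "v \<in> pts (Suc k) \<Longrightarrow> v = hd v # tl v \<and> tl v \<in> pts k"
  by (cases v) (auto simp: pts_def)

lemma pts_Suc_snoc: "v \<in> pts (Suc k) \<Longrightarrow> v = butlast v @ [last v] \<and> butlast v \<in> pts k"
  by (cases v rule: rev_cases) (auto simp: pts_def)

lemma pts_iff[simp]: "v \<in> pts k \<longleftrightarrow> length v = k"
  by (simp add: pts_def)

lemma pw_top_hom: "pw_top k \<in> hom (BijGroup (pts k)) (BijGroup (pts (Suc k)))"
proof (rule Bij_hom)
  fix g assume "g \<in> Bij (pts k)" then show "pw_top k g \<in> extensional (pts (Suc k))"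
    by (simp add: pw_top_def)
next
  fix g v assume g: "g \<in> Bij (pts k)" and v: "v \<in> pts (Suc k)"
  then show "pw_top k g v \<in> pts (Suc k)"
    using Bij_pts_img[OF g, of "tl v"] by (simp add: pw_top_def)
next
  fix g h assume g: "g \<in> Bij (pts k)" and h: "h \<in> Bij (pts k)"
  show "pw_top k (compose (pts k) g h) = compose (pts (Suc k)) (pw_top k g) (pw_top k h)"
  proof (rule ext)
    fix v show "pw_top k (compose (pts k) g h) v = compose (pts (Suc k)) (pw_top k g) (pw_top k h) v"
      using Bij_pts_img[OF h, of "tl v"] by (auto simp: pw_top_def compose_def)
  qed
next
  show "pw_top k (\<lambda>x\<in>pts k. x) = (\<lambda>x\<in>pts (Suc k). x)"
  proof (rule ext)
    fix v show "pw_top k (\<lambda>x\<in>pts k. x) v = (\<lambda>x\<in>pts (Suc k). x) v"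
      by (cases v) (auto simp: pw_top_def)
  qed
qed

definition liftc :: "nat \<Rightarrow> int \<Rightarrow> (int list \<Rightarrow> int list) \<Rightarrow> int list \<Rightarrow> int list" where
  "liftc k c g = (\<lambda>v\<in>pts (Suc k). if last v = c then g (butlast v) @ [c] else v)"

lemma liftc_hom: "liftc k c \<in> hom (BijGroup (pts k)) (BijGroup (pts (Suc k)))"
proof (rule Bij_hom)
  fix g assume "g \<in> Bij (pts k)" then show "liftc k c g \<in> extensional (pts (Suc k))"
    by (simp add: liftc_def)
next
  fix g v assume g: "g \<in> Bij (pts k)" and v: "v \<in> pts (Suc k)"
  then show "liftc k c g v \<in> pts (Suc k)"
    using Bij_pts_img[OF g, of "butlast v"] by (simp add: liftc_def)
next
  fix g h assume g: "g \<in> Bij (pts k)" and h: "h \<in> Bij (pts k)"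
  show "liftc k c (compose (pts k) g h) = compose (pts (Suc k)) (liftc k c g) (liftc k c h)"
  proof (rule ext)
    fix v show "liftc k c (compose (pts k) g h) v = compose (pts (Suc k)) (liftc k c g) (liftc k c h) v"
      using Bij_pts_img[OF h, of "butlast v"] by (auto simp: liftc_def compose_def)
  qed
next
  show "liftc k c (\<lambda>x\<in>pts k. x) = (\<lambda>x\<in>pts (Suc k). x)"
  proof (rule ext)
    fix v show "liftc k c (\<lambda>x\<in>pts k. x) v = (\<lambda>x\<in>pts (Suc k). x) v"
      using pts_Suc_snoc[of v k] by (auto simp: liftc_def)
  qed
qed

definition transl :: "int \<Rightarrow> int list \<Rightarrow> int list" where
  "transl c = (\<lambda>v\<in>pts (Suc 0). [hd v + c])"

lemma P1: "P (Suc 0) = range transl"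
  by (auto simp: transl_def)

lemma transl_0: "transl 0 = (\<lambda>v\<in>pts (Suc 0). v)"
proof (rule ext)
  fix v show "transl 0 v = (\<lambda>v\<in>pts (Suc 0). v) v"
    by (cases v) (auto simp: transl_def)
qed

lemma transl_Bij: "transl c \<in> Bij (pts (Suc 0))"
proof -
  have "bij_betw (transl c) (pts (Suc 0)) (pts (Suc 0))"
    by (rule bij_betw_byWitness[where f'="transl (- c)"]) (auto simp: transl_def length_Suc_conv)
  then show ?thesis by (simp add: Bij_def transl_def)
qed

lemma transl_comp: "compose (pts (Suc 0)) (transl c) (transl d) = transl (c + d)"
  by (rule ext) (auto simp: transl_def compose_def algebra_simps)

lemma group_BG: "group (BijGroup S)" by (rule group_BijGroup)

lemma BG_mult: "g \<in> Bij S \<Longrightarrow> h \<in> Bij S \<Longrightarrow> g \<otimes>\<^bsub>BijGroup S\<^esub> h = compose S g h"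
  by (simp add: BijGroup_def)

lemma BG_one: "\<one>\<^bsub>BijGroup S\<^esub> = (\<lambda>x\<in>S. x)"
  by (simp add: BijGroup_def)

lemma BG_carrier: "carrier (BijGroup S) = Bij S"
  by (simp add: BijGroup_def)

lemma sub_P1: "subgroup (P (Suc 0)) (BijGroup (pts (Suc 0)))"
proof (rule group.subgroupI[OF group_BG])
  show "P (Suc 0) \<subseteq> carrier (BijGroup (pts (Suc 0)))" unfolding P1 BG_carrier using transl_Bij by auto
  show "P (Suc 0) \<noteq> {}" unfolding P1 by simp
next
  fix a assume "a \<in> P (Suc 0)"
  then obtain c where a: "a = transl c" unfolding P1 by auto
  have "inv\<^bsub>BijGroup (pts (Suc 0))\<^esub> a = transl (- c)"
  proof (rule group.inv_equality[OF group_BG])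
    show "transl (- c) \<otimes>\<^bsub>BijGroup (pts (Suc 0))\<^esub> a = \<one>\<^bsub>BijGroup (pts (Suc 0))\<^esub>"
      using a transl_Bij by (simp add: BG_mult transl_comp transl_0 BG_one)
  qed (use a transl_Bij in \<open>auto simp: BG_carrier\<close>)
  then show "inv\<^bsub>BijGroup (pts (Suc 0))\<^esub> a \<in> P (Suc 0)" unfolding P1 by simp
next
  fix a b assume "a \<in> P (Suc 0)" "b \<in> P (Suc 0)"
  then show "a \<otimes>\<^bsub>BijGroup (pts (Suc 0))\<^esub> b \<in> P (Suc 0)"
    unfolding P1 using transl_Bij by (auto simp: BG_mult transl_comp)
qed

lemma hd_tl_len[simp]: "length a = Suc n \<Longrightarrow> hd a # tl a = a"
  by (cases a) auto

lemma pw_base_Bij: "pw_base k c y \<in> Bij (pts (Suc k))"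
proof -
  have "bij_betw (pw_base k c y) (pts (Suc k)) (pts (Suc k))"
    by (rule bij_betw_byWitness[where f'="pw_base k (- c) y"]) (auto simp: pw_base_def)
  then show ?thesis by (simp add: Bij_def pw_base_def)
qed

lemma sub_P: "subgroup (P (Suc k)) (BijGroup (pts (Suc k)))"
proof (induction k)
  case 0 then show ?case using sub_P1 by simp
next
  case (Suc k)
  have "pw_top (Suc k) ` P (Suc k) \<subseteq> carrier (BijGroup (pts (Suc (Suc k))))"
    using hom_in_carrier[OF pw_top_hom] subgroup.subset[OF Suc] by blast
  moreover have "{pw_base (Suc k) c y | c y. y \<in> pts (Suc k)} \<subseteq> carrier (BijGroup (pts (Suc (Suc k))))"
    using pw_base_Bij by (auto simp: BG_carrier)
  ultimately show ?case unfolding P.simps pwr_Z_def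
    by (intro group.generate_is_subgroup[OF group_BG]) blast
qed

lemma P_Bij: "g \<in> P (Suc k) \<Longrightarrow> g \<in> Bij (pts (Suc k))"
  using subgroup.subset[OF sub_P[of k]] by (auto simp: BG_carrier)

lemma P_mult: "g \<in> P (Suc k) \<Longrightarrow> h \<in> P (Suc k) \<Longrightarrow> compose (pts (Suc k)) g h \<in> P (Suc k)"
  using subgroup.m_closed[OF sub_P[of k]] P_Bij by (simp add: BG_mult)

lemma P_one: "(\<lambda>x\<in>pts (Suc k). x) \<in> P (Suc k)"
  using subgroup.one_closed[OF sub_P[of k]] by (simp add: BG_one)

lemma P_gen_top: "l \<in> P (Suc k) \<Longrightarrow> pw_top (Suc k) l \<in> P (Suc (Suc k))"
  unfolding P.simps pwr_Z_def by (rule generate.incl) blast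

lemma P_gen_base: "y \<in> pts (Suc k) \<Longrightarrow> pw_base (Suc k) c y \<in> P (Suc (Suc k))"
  unfolding P.simps pwr_Z_def by (rule generate.incl) blast

lemma len2_decomp: "length v = Suc (Suc n) \<Longrightarrow> \<exists>a w b. v = a # w @ [b] \<and> length w = n"
proof (cases v)
  case (Cons a t)
  assume l: "length v = Suc (Suc n)"
  then have "length t = Suc n" using Cons by simp
  then obtain w b where "t = w @ [b]" by (cases t rule: rev_cases) auto
  then show ?thesis using Cons l by auto
qed simp

lemma E0: "liftc 0 c (\<lambda>v\<in>pts 0. v) = (\<lambda>v\<in>pts (Suc 0). v)"
proof (rule ext)
  fix v show "liftc 0 c (\<lambda>v\<in>pts 0. v) v = (\<lambda>v\<in>pts (Suc 0). v) v"
    by (cases v) (auto simp: liftc_def)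
qed

lemma E1: "liftc (Suc 0) c (transl d) = pw_base (Suc 0) d [c]"
proof (rule ext)
  fix v show "liftc (Suc 0) c (transl d) v = pw_base (Suc 0) d [c] v"
  proof (cases "length v = Suc (Suc 0)")
    case True
    then obtain a w b where v: "v = a # w @ [b]" "length w = 0" using len2_decomp by blast
    then show ?thesis by (auto simp: liftc_def pw_base_def transl_def)
  next
    case False then show ?thesis by (simp add: liftc_def pw_base_def)
  qed
qed

lemma E2: "y \<in> pts (Suc k) \<Longrightarrow> liftc (Suc (Suc k)) c (pw_base (Suc k) d y) = pw_base (Suc (Suc k)) d (y @ [c])"
proof (rule ext)
  fix v assume y: "y \<in> pts (Suc k)"
  show "liftc (Suc (Suc k)) c (pw_base (Suc k) d y) v = pw_base (Suc (Suc k)) d (y @ [c]) v"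
  proof (cases "length v = Suc (Suc (Suc k))")
    case True
    then obtain a w b where v: "v = a # w @ [b]" "length w = Suc k" using len2_decomp by blast
    then show ?thesis using y by (auto simp: liftc_def pw_base_def)
  next
    case False then show ?thesis by (simp add: liftc_def pw_base_def)
  qed
qed

lemma E3: "liftc (Suc (Suc k)) c (pw_top (Suc k) l) = pw_top (Suc (Suc k)) (liftc (Suc k) c l)"
proof (rule ext)
  fix v
  show "liftc (Suc (Suc k)) c (pw_top (Suc k) l) v = pw_top (Suc (Suc k)) (liftc (Suc k) c l) v"
  proof (cases "length v = Suc (Suc (Suc k))")
    case True
    then obtain a w b where v: "v = a # w @ [b]" "length w = Suc k" using len2_decomp by blast
    then show ?thesis by (auto simp: liftc_def pw_top_def)
  next
    case False then show ?thesis by (simp add: liftc_def pw_top_def)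
  qed
qed

lemma liftc_gh: "group_hom (BijGroup (pts k)) (BijGroup (pts (Suc k))) (liftc k c)"
  by (simp add: group_hom_def group_hom_axioms_def group_BG liftc_hom)

lemma liftc_P_Suc: "l \<in> P (Suc k) \<Longrightarrow> liftc (Suc k) c l \<in> P (Suc (Suc k))"
proof (induction k arbitrary: l c)
  case 0
  then obtain d where "l = transl d" by (auto simp: transl_def)
  then show ?case using P_gen_base[of "[c]" 0 d] E1 by simp
next
  case (Suc k)
  let ?BG = "BijGroup (pts (Suc (Suc k)))"
  let ?gens = "{pw_base (Suc k) c y | c y. y \<in> pts (Suc k)} \<union> pw_top (Suc k) ` P (Suc k)"
  have gen: "liftc (Suc (Suc k)) c h \<in> P (Suc (Suc (Suc k)))" if "h \<in> ?gens" for h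
    using that
  proof
    assume "h \<in> {pw_base (Suc k) c y | c y. y \<in> pts (Suc k)}"
    then obtain d y where "h = pw_base (Suc k) d y" "y \<in> pts (Suc k)" by blast
    then show ?thesis using E2 P_gen_base[of "y @ [c]" "Suc k" d] by simp
  next
    assume "h \<in> pw_top (Suc k) ` P (Suc k)"
    then obtain l' where h: "h = pw_top (Suc k) l'" and l': "l' \<in> P (Suc k)" by blast
    show ?thesis unfolding h E3 by (rule P_gen_top[OF Suc.IH[OF l']])
  qed
  have gensB: "?gens \<subseteq> Bij (pts (Suc (Suc k)))"
    using pw_base_Bij hom_in_carrier[OF pw_top_hom] P_Bij by (fastforce simp: BG_carrier)
  have "l \<in> generate ?BG ?gens" using Suc.prems by (simp add: pwr_Z_def)
  then show ?case
  proof (induction rule: generate.induct)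
    case one
    have "liftc (Suc (Suc k)) c \<one>\<^bsub>?BG\<^esub> = (\<lambda>x\<in>pts (Suc (Suc (Suc k))). x)"
      using group_hom.hom_one[OF liftc_gh] by (simp only: BG_one)
    then show ?case using P_one[of "Suc (Suc k)"] by (simp only:)
  next
    case (incl h) then show ?case by (rule gen)
  next
    case (inv h)
    have "h \<in> carrier ?BG" using inv gensB by (auto simp: BG_carrier)
    then have "liftc (Suc (Suc k)) c (inv\<^bsub>?BG\<^esub> h) = inv\<^bsub>BijGroup (pts (Suc (Suc (Suc k))))\<^esub> (liftc (Suc (Suc k)) c h)"
      by (rule group_hom.hom_inv[OF liftc_gh])
    then show ?case using subgroup.m_inv_closed[OF sub_P gen[OF inv]] by simp
  next
    case (eng h1 h2)
    have "h1 \<in> P (Suc (Suc k))" "h2 \<in> P (Suc (Suc k))" using eng by (simp_all add: pwr_Z_def)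
    then have c: "h1 \<in> carrier ?BG" "h2 \<in> carrier ?BG" using P_Bij by (auto simp: BG_carrier)
    have "liftc (Suc (Suc k)) c (h1 \<otimes>\<^bsub>?BG\<^esub> h2) =
        liftc (Suc (Suc k)) c h1 \<otimes>\<^bsub>BijGroup (pts (Suc (Suc (Suc k))))\<^esub> liftc (Suc (Suc k)) c h2"
      using hom_mult[OF liftc_hom c] .
    then show ?case using subgroup.m_closed[OF sub_P eng.IH] by simp
  qed
qed

lemma liftc_P: "l \<in> P k \<Longrightarrow> liftc k c l \<in> P (Suc k)"
proof (cases k)
  case 0
  assume "l \<in> P k"
  then show ?thesis using 0 E0 P_one[of 0] by simp
next
  case (Suc k') then show "l \<in> P k \<Longrightarrow> ?thesis" using liftc_P_Suc by simp
qed

section \<open>theta: W i acting on Z^i\<close>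

fun theta :: "nat \<Rightarrow> wt \<Rightarrow> int list \<Rightarrow> int list" where
  "theta 0 x = (\<lambda>v\<in>pts 0. v)"
| "theta (Suc i) (WT f m) = (\<lambda>v\<in>pts (Suc i). theta i (f (last v + m)) (butlast v) @ [last v + m])"
| "theta (Suc i) WOne = (\<lambda>v. v)"


lemma W_r_one: "x \<in> carrier (W i) \<Longrightarrow> x \<otimes>\<^bsub>W i\<^esub> \<one>\<^bsub>W i\<^esub> = x"
  using group_W[of i] by (simp add: group.is_monoid monoid.r_one)


lemma W_Suc_elem: "x \<in> carrier (W (Suc i)) \<Longrightarrow> \<exists>f m. x = WT f m \<and> (\<forall>j. f j \<in> carrier (W i)) \<and> finite {j. f j \<noteq> \<one>\<^bsub>W i\<^esub>}"
  using W_Suc_carrier_cases W_Suc_carrier by blast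

lemma theta_pts: "x \<in> carrier (W i) \<Longrightarrow> v \<in> pts i \<Longrightarrow> theta i x v \<in> pts i"
proof (induction i arbitrary: x v)
  case 0 then show ?case by simp
next
  case (Suc i)
  then obtain f m where x: "x = WT f m" "\<forall>j. f j \<in> carrier (W i)" using W_Suc_elem by blast
  have "butlast v \<in> pts i" using Suc.prems by simp
  then show ?case using Suc x by simp
qed

lemma theta_ext: "x \<in> carrier (W i) \<Longrightarrow> theta i x \<in> extensional (pts i)"
proof (cases i)
  case 0 then show ?thesis by simp
next
  case (Suc i')
  assume "x \<in> carrier (W i)"
  then obtain f m where "x = WT f m" using Suc W_Suc_elem by blast
  then show ?thesis using Suc by simp
qed

lemma theta_one: "theta i \<one>\<^bsub>W i\<^esub> = (\<lambda>v\<in>pts i. v)"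
proof (induction i)
  case 0 then show ?case by simp
next
  case (Suc i)
  show ?case
  proof (rule ext)
    fix v show "theta (Suc i) \<one>\<^bsub>W (Suc i)\<^esub> v = (\<lambda>v\<in>pts (Suc i). v) v"
      using Suc pts_Suc_snoc[of v i] by (auto simp: W_Suc_one simp del: W.simps)
  qed
qed

lemma theta_mult: "x \<in> carrier (W i) \<Longrightarrow> y \<in> carrier (W i) \<Longrightarrow>
   theta i (x \<otimes>\<^bsub>W i\<^esub> y) = compose (pts i) (theta i x) (theta i y)"
proof (induction i arbitrary: x y)
  case 0 then show ?case by (auto simp: compose_def)
next
  case (Suc i)
  obtain f m where x: "x = WT f m" "\<forall>j. f j \<in> carrier (W i)" using W_Suc_elem Suc.prems by blast
  obtain g n where y: "y = WT g n" "\<forall>j. g j \<in> carrier (W i)" using W_Suc_elem Suc.prems by blast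
  have xy: "x \<otimes>\<^bsub>W (Suc i)\<^esub> y = WT (\<lambda>j. f j \<otimes>\<^bsub>W i\<^esub> g (j - m)) (m + n)"
    using W_Suc_mult Suc.prems x y by simp
  show ?case
  proof (rule ext)
    fix v
    show "theta (Suc i) (x \<otimes>\<^bsub>W (Suc i)\<^esub> y) v = compose (pts (Suc i)) (theta (Suc i) x) (theta (Suc i) y) v"
    proof (cases "v \<in> pts (Suc i)")
      case True
      have u: "butlast v \<in> pts i" using True by simp
      have tu: "theta i (g (last v + n)) (butlast v) \<in> pts i" using theta_pts[OF _ u] y by blast
      have "theta (Suc i) (x \<otimes>\<^bsub>W (Suc i)\<^esub> y) v =
         theta i (f (last v + (m + n)) \<otimes>\<^bsub>W i\<^esub> g (last v + n)) (butlast v) @ [last v + (m + n)]"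
        using True by (simp add: xy del: W.simps)
      also have "\<dots> = theta i (f (last v + (m + n))) (theta i (g (last v + n)) (butlast v)) @ [last v + (m + n)]"
        using Suc.IH[of "f (last v + (m + n))" "g (last v + n)"] x y u by (simp add: compose_def)
      also have "\<dots> = compose (pts (Suc i)) (theta (Suc i) x) (theta (Suc i) y) v"
        using True tu x y by (simp add: compose_def algebra_simps)
      finally show ?thesis .
    next
      case False then show ?thesis using xy x y by (simp add: compose_def del: W.simps)
    qed
  qed
qed

lemma theta_inj: "x \<in> carrier (W i) \<Longrightarrow> y \<in> carrier (W i) \<Longrightarrow> theta i x = theta i y \<Longrightarrow> x = y"
proof (induction i arbitrary: x y)
  case 0 then show ?case by simp
next
  case (Suc i)
  obtain f m where x: "x = WT f m" "\<forall>j. f j \<in> carrier (W i)" using W_Suc_elem Suc.prems by blast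
  obtain g n where y: "y = WT g n" "\<forall>j. g j \<in> carrier (W i)" using W_Suc_elem Suc.prems by blast
  have key: "theta i (f d) w @ [d] = theta i (g (d - m + n)) w @ [d - m + n]" if w: "w \<in> pts i" for d w
  proof -
    have "w @ [d - m] \<in> pts (Suc i)" using w by simp
    then show ?thesis using fun_cong[OF Suc.prems(3), of "w @ [d - m]"] x y by simp
  qed
  have mn: "m = n" using key[of "replicate i 0" 0] by simp
  have "f d = g d" for d
  proof -
    have "theta i (f d) w = theta i (g d) w" for w
    proof (cases "w \<in> pts i")
      case True then show ?thesis using key[OF True, of d] mn by simp
    next
      case False then show ?thesis using theta_ext x y by (simp add: extensional_def)
    qed
    then show ?thesis using Suc.IH x y by blast
  qed
  then show ?case using x y mn by auto
qed

lemma shiftl_P: "(\<lambda>v\<in>pts (Suc i). butlast v @ [last v + m]) \<in> P (Suc i)"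
proof (induction i)
  case 0
  have "(\<lambda>v\<in>pts (Suc 0). butlast v @ [last v + m]) = transl m"
  proof (rule ext)
    fix v show "(\<lambda>v\<in>pts (Suc 0). butlast v @ [last v + m]) v = transl m v"
      by (cases v) (auto simp: transl_def)
  qed
  then show ?case unfolding P1 by simp
next
  case (Suc i)
  have eq: "(\<lambda>v\<in>pts (Suc (Suc i)). butlast v @ [last v + m]) = pw_top (Suc i) (\<lambda>v\<in>pts (Suc i). butlast v @ [last v + m])"
  proof (rule ext)
    fix v show "(\<lambda>v\<in>pts (Suc (Suc i)). butlast v @ [last v + m]) v = pw_top (Suc i) (\<lambda>v\<in>pts (Suc i). butlast v @ [last v + m]) v"
    proof (cases "length v = Suc (Suc i)")
      case True
      then obtain a w b where v: "v = a # w @ [b]" "length w = i" using len2_decomp by blast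
      then show ?thesis by (simp add: pw_top_def butlast_append)
    next
      case False then show ?thesis by (simp add: pw_top_def)
    qed
  qed
  show ?case unfolding eq by (rule P_gen_top[OF Suc.IH])
qed

lemma theta_P: "x \<in> carrier (W i) \<Longrightarrow> theta i x \<in> P i"
proof (induction i arbitrary: x)
  case 0 then show ?case by (simp add: restrict_def del: pts_iff)
next
  case (Suc i)
  obtain f m where x: "x = WT f m" "\<forall>j. f j \<in> carrier (W i)" "finite {j. f j \<noteq> \<one>\<^bsub>W i\<^esub>}"
    using W_Suc_elem Suc.prems by blast
  have fin: "\<forall>f. (\<forall>j. f j \<in> carrier (W i)) \<longrightarrow> {j. f j \<noteq> \<one>\<^bsub>W i\<^esub>} \<subseteq> F \<longrightarrow> theta (Suc i) (WT f 0) \<in> P (Suc i)"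
    if "finite F" for F
    using that
  proof (induction F rule: finite_induct)
    case empty
    show ?case
    proof (intro allI impI)
      fix f :: "int \<Rightarrow> wt" assume "{j. f j \<noteq> \<one>\<^bsub>W i\<^esub>} \<subseteq> {}"
      then have "f = (\<lambda>_. \<one>\<^bsub>W i\<^esub>)" by auto
      then show "theta (Suc i) (WT f 0) \<in> P (Suc i)"
        using theta_one[of "Suc i"] P_one[of i] by (simp add: W_Suc_one del: W.simps theta.simps)
    qed
  next
    case (insert d F)
    show ?case
    proof (intro allI impI)
      fix f :: "int \<Rightarrow> wt" assume fc: "\<forall>j. f j \<in> carrier (W i)" and fs: "{j. f j \<noteq> \<one>\<^bsub>W i\<^esub>} \<subseteq> insert d F"
      define f' where "f' = f(d := \<one>\<^bsub>W i\<^esub>)"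
      define g where "g = (\<lambda>j. if j = d then f d else \<one>\<^bsub>W i\<^esub>)"
      have f'c: "\<forall>j. f' j \<in> carrier (W i)" using fc W_one_carrier by (simp add: f'_def)
      have f's: "{j. f' j \<noteq> \<one>\<^bsub>W i\<^esub>} \<subseteq> F" using fs by (auto simp: f'_def)
      have gc: "\<forall>j. g j \<in> carrier (W i)" using fc W_one_carrier by (simp add: g_def)
      have gs: "finite {j. g j \<noteq> \<one>\<^bsub>W i\<^esub>}" by (rule finite_subset[of _ "{d}"]) (auto simp: g_def)
      have f'fin: "finite {j. f' j \<noteq> \<one>\<^bsub>W i\<^esub>}" using f's insert(1) finite_subset by blast
      have c1: "WT f' 0 \<in> carrier (W (Suc i))" using f'c f'fin W_Suc_carrier by blast
      have c2: "WT g 0 \<in> carrier (W (Suc i))" using gc gs W_Suc_carrier by blast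
      have "WT f' 0 \<otimes>\<^bsub>W (Suc i)\<^esub> WT g 0 = WT (\<lambda>j. f' j \<otimes>\<^bsub>W i\<^esub> g (j - 0)) (0 + 0)"
        by (rule W_Suc_mult[OF c1 c2])
      also have "\<dots> = WT f 0"
        using fc W_one_carrier W_r_one W_l_one by (auto simp: f'_def g_def intro!: ext)
      finally have dec: "theta (Suc i) (WT f 0) = compose (pts (Suc i)) (theta (Suc i) (WT f' 0)) (theta (Suc i) (WT g 0))"
        using theta_mult[OF c1 c2] by simp
      have tg: "theta (Suc i) (WT g 0) = liftc i d (theta i (f d))"
      proof (rule ext)
        fix v show "theta (Suc i) (WT g 0) v = liftc i d (theta i (f d)) v"
          using theta_one[of i] pts_Suc_snoc[of v i] by (auto simp: liftc_def g_def)
      qed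
      have "theta (Suc i) (WT g 0) \<in> P (Suc i)" using tg liftc_P Suc.IH fc by simp
      moreover have "theta (Suc i) (WT f' 0) \<in> P (Suc i)" using insert(3) f'c f's by blast
      ultimately show "theta (Suc i) (WT f 0) \<in> P (Suc i)" using dec P_mult by simp
    qed
  qed
  have c1: "WT f 0 \<in> carrier (W (Suc i))" using x W_Suc_carrier by blast
  have c2: "WT (\<lambda>_. \<one>\<^bsub>W i\<^esub>) m \<in> carrier (W (Suc i))" using W_Suc_carrier W_one_carrier by simp
  have "WT f 0 \<otimes>\<^bsub>W (Suc i)\<^esub> WT (\<lambda>_. \<one>\<^bsub>W i\<^esub>) m = WT (\<lambda>j. f j \<otimes>\<^bsub>W i\<^esub> \<one>\<^bsub>W i\<^esub>) (0 + m)"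
    by (rule W_Suc_mult[OF c1 c2])
  also have "\<dots> = x" using x W_r_one by simp
  finally have dec: "theta (Suc i) x = compose (pts (Suc i)) (theta (Suc i) (WT f 0)) (theta (Suc i) (WT (\<lambda>_. \<one>\<^bsub>W i\<^esub>) m))"
    using theta_mult[OF c1 c2] by simp
  have sh: "theta (Suc i) (WT (\<lambda>_. \<one>\<^bsub>W i\<^esub>) m) = (\<lambda>v\<in>pts (Suc i). butlast v @ [last v + m])"
    using theta_one[of i] by (auto intro!: ext)
  have "theta (Suc i) (WT f 0) \<in> P (Suc i)" using fin[OF x(3)] x(2) by blast
  then show ?case using dec sh shiftl_P P_mult by simp
qed

definition phiP :: "(nat \<Rightarrow> wt) \<Rightarrow> nat \<Rightarrow> int list \<Rightarrow> int list" where
  "phiP x n = (\<lambda>v\<in>pts (Suc n). if 0 \<le> last v \<and> nat (last v) \<le> n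
      then take (n - nat (last v)) (butlast v) @ theta (nat (last v)) (x (nat (last v))) (drop (n - nat (last v)) (butlast v)) @ [last v]
      else v)"

lemma Wsum_comp: "x \<in> carrier Wsum \<Longrightarrow> x i \<in> carrier (W i)"
  by (simp add: Wsum_carrier)

lemma phiP_0: "phiP x 0 = (\<lambda>v\<in>pts (Suc 0). v)"
proof (rule ext)
  fix v show "phiP x 0 v = (\<lambda>v\<in>pts (Suc 0). v) v"
    by (cases v) (auto simp: phiP_def)
qed

lemma phiP_dec:
  assumes x: "x \<in> carrier Wsum"
  shows "phiP x (Suc n) = compose (pts (Suc (Suc n))) (pw_top (Suc n) (phiP x n))
            (liftc (Suc n) (int (Suc n)) (theta (Suc n) (x (Suc n))))"
proof (rule ext)
  fix v
  show "phiP x (Suc n) v = compose (pts (Suc (Suc n))) (pw_top (Suc n) (phiP x n))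
            (liftc (Suc n) (int (Suc n)) (theta (Suc n) (x (Suc n)))) v"
  proof (cases "length v = Suc (Suc n)")
    case False then show ?thesis by (simp add: phiP_def compose_def)
  next
    case True
    then obtain a w b where v: "v = a # w @ [b]" "length w = n" using len2_decomp by blast
    show ?thesis
    proof (cases "b = int (Suc n)")
      case True
      define t where "t = theta (Suc n) (x (Suc n)) (a # w)"
      have t: "length t = Suc n" using theta_pts[OF Wsum_comp[OF x], of "a # w" "Suc n"] v by (simp add: t_def)
      then obtain t0 t' where t0: "t = t0 # t'" "length t' = n" by (cases t) auto
      have nb: "nat (1 + int n) = Suc n" by (simp add: nat_add_distrib)
      have "phiP x (Suc n) v = t @ [b]" using True v nb by (simp add: phiP_def t_def)
      moreover have "liftc (Suc n) (int (Suc n)) (theta (Suc n) (x (Suc n))) v = t @ [b]"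
        using True v by (simp add: liftc_def t_def)
      moreover have "phiP x n (t' @ [b]) = t' @ [b]" using True t0 by (simp add: phiP_def)
      ultimately show ?thesis using v t0 t by (simp add: compose_def pw_top_def)
    next
      case False
      have l: "liftc (Suc n) (int (Suc n)) (theta (Suc n) (x (Suc n))) v = v"
        using False v by (simp add: liftc_def)
      have pt: "pw_top (Suc n) (phiP x n) v = a # phiP x n (w @ [b])" using v by (simp add: pw_top_def)
      show ?thesis
      proof (cases "0 \<le> b \<and> nat b \<le> n")
        case True
        have s: "Suc n - nat b = Suc (n - nat b)" by (rule Suc_diff_le) (use True in simp)
        have "phiP x (Suc n) v = a # take (n - nat b) w @ theta (nat b) (x (nat b)) (drop (n - nat b) w) @ [b]"
          using True v by (simp add: phiP_def s)
        moreover have "phiP x n (w @ [b]) = take (n - nat b) w @ theta (nat b) (x (nat b)) (drop (n - nat b) w) @ [b]"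
          using True v by (simp add: phiP_def)
        ultimately show ?thesis using l pt v by (simp add: compose_def)
      next
        case nb: False
        have "\<not> (0 \<le> b \<and> nat b \<le> Suc n)" using nb False by auto
        then have "phiP x (Suc n) v = v" using v by (auto simp: phiP_def)
        moreover have "phiP x n (w @ [b]) = w @ [b]" using nb v by (auto simp: phiP_def)
        ultimately show ?thesis using l pt v by (simp add: compose_def)
      qed
    qed
  qed
qed

lemma phiP_P: "x \<in> carrier Wsum \<Longrightarrow> phiP x n \<in> P (Suc n)"
proof (induction n)
  case 0 show ?case unfolding phiP_0 by (rule P_one)
next
  case (Suc n)
  have a: "pw_top (Suc n) (phiP x n) \<in> P (Suc (Suc n))" by (rule P_gen_top[OF Suc.IH[OF Suc.prems]])
  have b: "liftc (Suc n) (int (Suc n)) (theta (Suc n) (x (Suc n))) \<in> P (Suc (Suc n))"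
    by (rule liftc_P[OF theta_P[OF Wsum_comp[OF Suc.prems]]])
  show ?case unfolding phiP_dec[OF Suc.prems] by (rule P_mult[OF a b])
qed

lemma phiP_emb:
  assumes x: "x \<in> carrier Wsum" and n: "NW x \<le> n"
  shows "phiP x (Suc n) = pw_top (Suc n) (phiP x n)"
proof -
  have x1: "x (Suc n) = \<one>\<^bsub>W (Suc n)\<^esub>" using NW[OF x] n by simp
  have "liftc (Suc n) (int (Suc n)) (\<one>\<^bsub>BijGroup (pts (Suc n))\<^esub>) = \<one>\<^bsub>BijGroup (pts (Suc (Suc n)))\<^esub>"
    by (rule group_hom.hom_one[OF liftc_gh])
  then have l: "liftc (Suc n) (int (Suc n)) (theta (Suc n) (x (Suc n))) = (\<lambda>v\<in>pts (Suc (Suc n)). v)"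
    unfolding x1 theta_one BG_one .
  have pb: "pw_top (Suc n) (phiP x n) \<in> Bij (pts (Suc (Suc n)))"
    using P_Bij[OF P_gen_top[OF phiP_P[OF x]]] .
  show ?thesis unfolding phiP_dec[OF x] l
    by (rule compose_Id) (use pb in \<open>auto simp: Bij_def bij_betw_def\<close>)
qed

lemma phiP_mult:
  assumes x: "x \<in> carrier Wsum" and y: "y \<in> carrier Wsum"
  shows "phiP (x \<otimes>\<^bsub>Wsum\<^esub> y) n = compose (pts (Suc n)) (phiP x n) (phiP y n)"
proof (rule ext)
  fix v
  show "phiP (x \<otimes>\<^bsub>Wsum\<^esub> y) n v = compose (pts (Suc n)) (phiP x n) (phiP y n) v"
  proof (cases "v \<in> pts (Suc n)")
    case False then show ?thesis by (simp add: phiP_def compose_def del: pts_iff)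
  next
    case vp: True
    define c where "c = last v"
    define u where "u = butlast v"
    have vu: "v = u @ [c]" "length u = n" using pts_Suc_snoc[OF vp] by (simp_all add: u_def c_def)
    show ?thesis
    proof (cases "0 \<le> c \<and> nat c \<le> n")
      case True
      define i where "i = nat c"
      define A where "A = take (n - i) u"
      define B where "B = drop (n - i) u"
      have AB: "length A = n - i" "length B = i" "u = A @ B" using vu True by (simp_all add: A_def B_def i_def)
      have Bp: "B \<in> pts i" using AB by simp
      have ty: "length (theta i (y i) B) = i" using theta_pts[OF Wsum_comp[OF y] Bp] by simp
      have e1: "phiP y n v = A @ theta i (y i) B @ [c]"
        using True vu by (simp add: phiP_def A_def B_def i_def flip: c_def)
      have e2: "phiP x n (A @ theta i (y i) B @ [c]) = A @ theta i (x i) (theta i (y i) B) @ [c]"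
        using True AB ty by (simp add: phiP_def i_def flip: append_assoc)
      have e3: "phiP (x \<otimes>\<^bsub>Wsum\<^esub> y) n v = A @ theta i (x i \<otimes>\<^bsub>W i\<^esub> y i) B @ [c]"
        using True vu by (simp add: phiP_def A_def B_def i_def Wsum_mult flip: c_def)
      have e4: "theta i (x i \<otimes>\<^bsub>W i\<^esub> y i) B = theta i (x i) (theta i (y i) B)"
        using theta_mult[OF Wsum_comp[OF x] Wsum_comp[OF y]] Bp by (simp add: compose_def)
      have "i \<le> n" using True by (simp add: i_def)
      then have "A @ theta i (y i) B @ [c] \<in> pts (Suc n)" using AB ty by simp
      then show ?thesis using e1 e2 e3 e4 vp by (simp add: compose_def)
    next
      case False
      have "phiP y n v = v" "phiP x n v = v" "phiP (x \<otimes>\<^bsub>Wsum\<^esub> y) n v = v"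
        using False vp by (auto simp: phiP_def simp flip: c_def)
      then show ?thesis using vp by (simp add: compose_def)
    qed
  qed
qed

lemma phiP_eq:
  assumes x: "x \<in> carrier Wsum" and y: "y \<in> carrier Wsum" and e: "phiP x n = phiP y n" and i: "i \<le> n"
  shows "x i = y i"
proof -
  have "theta i (x i) w = theta i (y i) w" for w
  proof (cases "w \<in> pts i")
    case True
    define v where "v = replicate (n - i) (0::int) @ w @ [int i]"
    have vp: "v \<in> pts (Suc n)" using True i by (simp add: v_def)
    have "phiP x n v = replicate (n - i) 0 @ theta i (x i) w @ [int i]"
      using True i by (simp add: phiP_def v_def butlast_append flip: append_assoc)
    moreover have "phiP y n v = replicate (n - i) 0 @ theta i (y i) w @ [int i]"
      using True i by (simp add: phiP_def v_def butlast_append flip: append_assoc)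
    ultimately show ?thesis using e by simp
  next
    case False then show ?thesis
      using theta_ext[OF Wsum_comp[OF x], of i] theta_ext[OF Wsum_comp[OF y], of i]
      by (simp add: extensional_def)
  qed
  then show ?thesis using theta_inj[OF Wsum_comp[OF x] Wsum_comp[OF y]] by blast
qed

lemma phiP_inj: "x \<in> carrier Wsum \<Longrightarrow> y \<in> carrier Wsum \<Longrightarrow> NW x \<le> n \<Longrightarrow> NW y \<le> n \<Longrightarrow>
   phiP x n = phiP y n \<Longrightarrow> x = y"
proof (rule ext)
  fix j assume x: "x \<in> carrier Wsum" and y: "y \<in> carrier Wsum" and nx: "NW x \<le> n" and ny: "NW y \<le> n"
    and e: "phiP x n = phiP y n"
  show "x j = y j"
  proof (cases "j \<le> n")
    case True then show ?thesis using phiP_eq[OF x y e] by simp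
  next
    case False then show ?thesis using NW[OF x, of j] NW[OF y, of j] nx ny by simp
  qed
qed

lemma Pgrp_carrier: "carrier (P_grp k) = P k" by (simp add: P_grp_def)

lemma Pgrp_mult: "g \<in> P (Suc k) \<Longrightarrow> h \<in> P (Suc k) \<Longrightarrow> g \<otimes>\<^bsub>P_grp (Suc k)\<^esub> h = compose (pts (Suc k)) g h"
  using P_Bij by (simp add: P_grp_def BG_mult)

lemma group_Pgrp: "group (P_grp (Suc k))"
  unfolding P_grp_def by (rule subgroup.subgroup_is_group[OF sub_P group_BG])

lemma pw_top_Phom: "pw_top (Suc k) \<in> hom (P_grp (Suc k)) (P_grp (Suc (Suc k)))"
proof (rule homI)
  fix g assume "g \<in> carrier (P_grp (Suc k))"
  then show "pw_top (Suc k) g \<in> carrier (P_grp (Suc (Suc k)))" using P_gen_top by (simp add: Pgrp_carrier)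
next
  fix g h assume g: "g \<in> carrier (P_grp (Suc k))" and h: "h \<in> carrier (P_grp (Suc k))"
  have gh: "g \<in> carrier (BijGroup (pts (Suc k)))" "h \<in> carrier (BijGroup (pts (Suc k)))"
    using g h P_Bij by (auto simp: Pgrp_carrier BG_carrier)
  have "pw_top (Suc k) (g \<otimes>\<^bsub>BijGroup (pts (Suc k))\<^esub> h) =
      pw_top (Suc k) g \<otimes>\<^bsub>BijGroup (pts (Suc (Suc k)))\<^esub> pw_top (Suc k) h"
    by (rule hom_mult[OF pw_top_hom gh])
  then show "pw_top (Suc k) (g \<otimes>\<^bsub>P_grp (Suc k)\<^esub> h) = pw_top (Suc k) g \<otimes>\<^bsub>P_grp (Suc (Suc k))\<^esub> pw_top (Suc k) h"
    by (simp add: P_grp_def)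
qed

lemma pw_top_inj: "inj_on (pw_top (Suc k)) (carrier (P_grp (Suc k)))"
proof (rule inj_onI)
  fix g h assume g: "g \<in> carrier (P_grp (Suc k))" and h: "h \<in> carrier (P_grp (Suc k))"
    and e: "pw_top (Suc k) g = pw_top (Suc k) h"
  have gb: "g \<in> Bij (pts (Suc k))" "h \<in> Bij (pts (Suc k))" using g h P_Bij by (auto simp: Pgrp_carrier)
  show "g = h"
  proof (rule extensionalityI[of _ "pts (Suc k)"])
    show "g \<in> extensional (pts (Suc k))" "h \<in> extensional (pts (Suc k))" using gb by (auto simp: Bij_def)
  next
    fix w assume w: "w \<in> pts (Suc k)"
    have "0 # w \<in> pts (Suc (Suc k))" using w by simp
    then show "g w = h w" using fun_cong[OF e, of "0 # w"] w by (simp add: pw_top_def del: pts_iff)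
  qed
qed

theorem part_wrZ: "\<exists>h. h \<in> mon Wsum wrZ_inf"
  unfolding wrZ_inf_def
  apply (rule exI)
  apply (rule dirlim_mon[where S=Wsum and \<phi>="\<lambda>n x. phiP x n" and N=NW])
         apply (rule group_Pgrp)
        apply (rule pw_top_Phom)
       apply (rule pw_top_inj)
      apply (erule (1) Wsum_closed)
     apply (simp add: Pgrp_carrier phiP_P)
    apply (simp add: Pgrp_mult phiP_P phiP_mult)
   apply (erule (1) phiP_emb)
  apply (erule (4) phiP_inj)
  done

theorem lemma22:
  shows "(\<exists>h. h \<in> mon Wsum wrZ_inf) \<and> (\<exists>h. h \<in> mon Wsum Zwr_inf)"
  using part_wrZ part_Zwr by blast

end
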